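(* Let $\mathbb{K}\in\{\mathbb{R},\mathbb{C}\}$, $\star\in\{*,T\}$, $\epsilon_1,\epsilon_2\in\{1,-1\}$, and let $Q(\lambda)=\lambda^2M+\lambda D+K\in\mathbb{K}^{n\times n}[\lambda]$ satisfy $M^\star=\epsilon_1M$, $D^\star=\epsilon_2D$, $K^\star=\epsilon_1K$. Let $(X_j,\Lambda_j)\in\mathbb{K}^{n\times p_j}\times\mathbb{K}^{p_j\times p_j}$, $j\in\{1,2\}$, be invariant pairs of $Q(\lambda)$, and set $S_{jk}:=X_j^\star MX_k\Lambda_k+\epsilon_1\epsilon_2\Lambda_j^\star X_j^\star MX_k+X_j^\star DX_k$ for $j,k\in\{1,2\}$. Then: (a) $\lambda_0\in\mathbb{C}$ is an eigenvalue of $Q(\lambda)$ (i.e. $\det(\lambda_0^2M+\lambda_0D+K)=0$) if and only if $\epsilon_1\epsilon_2\lambda_0^\star$ is an eigenvalue of $Q(\lambda)$; (b) $S_{jk}\Lambda_k=\epsilon_1\epsilon_2\Lambda_j^\star S_{jk}$; (c) $S_{jk}=0$ whenever $\sigma(\epsilon_1\epsilon_2\Lambda_j^\star)\cap\sigma(\Lambda_k)=\emptyset$.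
   Context: For a matrix $A$, $A^*$ is the conjugate transpose and $A^T$ the transpose; $A^\star$ means $A^*$ if $\star=*$ and $A^T$ if $\star=T$. For $\lambda\in\mathbb{C}$, $\lambda^\star=\overline{\lambda}$ if $\star=*$ and $\lambda^\star=\lambda$ if $\star=T$. $\sigma(A)$ is the spectrum. A pair $(X,\Lambda)\in\mathbb{K}^{n\times p}\times\mathbb{K}^{p\times p}$ is an invariant pair of $Q(\lambda)$ if $MX\Lambda^2+DX\Lambda+KX=0$. *)

theory Defs
  imports "Jordan_Normal_Form.Spectral_Radius"
begin

(* The operation A^star: conjugate transpose if c (star = * ), plain transpose otherwise (star = T). *)
definition star_mat :: "bool \<Rightarrow> complex mat \<Rightarrow> complex mat" where
  "star_mat c A = (if c then map_mat cnj (transpose_mat A) else transpose_mat A)"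

definition star_sc :: "bool \<Rightarrow> complex \<Rightarrow> complex" where
  "star_sc c z = (if c then cnj z else z)"

definition quad_eigenvalue :: "complex mat \<Rightarrow> complex mat \<Rightarrow> complex mat \<Rightarrow> complex \<Rightarrow> bool" where
  "quad_eigenvalue M D K l \<longleftrightarrow> det ((l^2) \<cdot>\<^sub>m M + l \<cdot>\<^sub>m D + K) = 0"

definition invariant_pair :: "complex mat \<Rightarrow> complex mat \<Rightarrow> complex mat \<Rightarrow> complex mat \<Rightarrow> complex mat \<Rightarrow> bool" where
  "invariant_pair M D K X L \<longleftrightarrow> M * X * L * L + D * X * L + K * X = 0\<^sub>m (dim_row M) (dim_col X)"

definition S_mat :: "bool \<Rightarrow> complex \<Rightarrow> complex \<Rightarrow> complex mat \<Rightarrow> complex mat \<Rightarrow> complex mat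
    \<Rightarrow> complex mat \<Rightarrow> complex mat \<Rightarrow> complex mat \<Rightarrow> complex mat" where
  "S_mat c e1 e2 M D Xj Lj Xk Lk =
     star_mat c Xj * M * Xk * Lk + (e1 * e2) \<cdot>\<^sub>m (star_mat c Lj * star_mat c Xj * M * Xk)
     + star_mat c Xj * D * Xk"

end

theory Submission
  imports Defs
begin

lemma eig_diag_ut:
  fixes T :: "complex mat"
  assumes T: "T \<in> carrier_mat q q" and ut: "upper_triangular T" and j: "j < q"
  shows "eigenvalue T (T $$ (j,j))"
proof -
  have "char_poly T = (\<Prod> a \<leftarrow> diag_mat T. [:- a, 1:])"
    using char_poly_upper_triangular[OF T ut] .
  moreover have "T $$ (j,j) \<in> set (diag_mat T)" using T j unfolding diag_mat_def by auto
  ultimately have "poly (char_poly T) (T $$ (j,j)) = 0"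
    by (simp add: poly_prod_list prod_list_zero_iff)
  thus ?thesis using eigenvalue_root_char_poly[OF T] by simp
qed

lemma sylvester_unique:
  fixes A B X :: "complex mat"
  assumes A: "A \<in> carrier_mat p p" and B: "B \<in> carrier_mat q q" and X: "X \<in> carrier_mat p q"
    and eq: "A * X = X * B" and disj: "spectrum A \<inter> spectrum B = {}"
  shows "X = 0\<^sub>m p q"
proof -
  obtain es where es: "char_poly B = (\<Prod> a \<leftarrow> es. [:- a, 1:])"
    using char_poly_factorized[OF B] by blast
  obtain T P Q where sd: "schur_decomposition B es = (T,P,Q)" by (cases "schur_decomposition B es") auto
  from schur_decomposition[OF B es sd] have wit: "similar_mat_wit B T P Q" and ut: "upper_triangular T"
    by auto
  from similar_mat_witD2[OF B wit] have T: "T \<in> carrier_mat q q" and P: "P \<in> carrier_mat q q"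
    and Q: "Q \<in> carrier_mat q q" and PQ: "P * Q = 1\<^sub>m q" and QP: "Q * P = 1\<^sub>m q" and BT: "B = P * T * Q"
    by auto
  have simBT: "similar_mat B T" using wit unfolding similar_mat_def by auto
  define Y where "Y = X * P"
  have Y: "Y \<in> carrier_mat p q" using X P Y_def by auto
  have AY: "A * Y = Y * T"
  proof -
    have "A * Y = (A * X) * P" using A X P Y_def by (simp add: assoc_mult_mat mult_carrier_mat)
    also have "\<dots> = X * B * P" using eq by simp
    also have "\<dots> = X * (B * P)" using X B P by (simp add: assoc_mult_mat mult_carrier_mat)
    also have "B * P = P * T"
    proof -
      have TQ: "T * Q \<in> carrier_mat q q" using T Q by simp
      have "B * P = P * (T * Q) * P" using BT P T Q by (simp add: assoc_mult_mat)
      also have "\<dots> = P * (T * Q * P)" using P TQ P by (rule assoc_mult_mat)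
      also have "T * Q * P = T * (Q * P)" using T Q P by (rule assoc_mult_mat)
      finally show ?thesis using QP P T by simp
    qed
    also have "X * (P * T) = Y * T" using X P T Y_def by (simp add: assoc_mult_mat mult_carrier_mat)
    finally show ?thesis .
  qed
  have evT: "\<And>e. eigenvalue T e \<Longrightarrow> eigenvalue B e"
    using char_poly_similar[OF simBT] eigenvalue_root_char_poly[OF B] eigenvalue_root_char_poly[OF T] by simp
  have Y0: "\<forall>i<p. Y $$ (i,j) = 0" if "j < q" for j
    using that
  proof (induction j rule: less_induct)
    case (less j)
    define y where "y = col Y j"
    have y: "y \<in> carrier_vec p" using Y y_def by auto
    have "A *\<^sub>v y = T $$ (j,j) \<cdot>\<^sub>v y"
    proof (rule eq_vecI)
      fix i assume i: "i < dim_vec (T $$ (j,j) \<cdot>\<^sub>v y)"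
      hence ip: "i < p" using y by auto
      have "(A *\<^sub>v y) $ i = (A * Y) $$ (i,j)" using A Y ip less.prems y_def by simp
      also have "\<dots> = (Y * T) $$ (i,j)" using AY by simp
      also have "\<dots> = (\<Sum>l<q. Y $$ (i,l) * T $$ (l,j))"
        using Y T ip less.prems by (simp add: scalar_prod_def lessThan_atLeast0)
      also have "\<dots> = Y $$ (i,j) * T $$ (j,j)"
      proof -
        have r: "(\<Sum>l<q. Y $$ (i,l) * T $$ (l,j)) = Y $$ (i,j) * T $$ (j,j) + (\<Sum>l\<in>{..<q}-{j}. Y $$ (i,l) * T $$ (l,j))"
          by (rule sum.remove) (use less.prems in auto)
        have "(\<Sum>l\<in>{..<q}-{j}. Y $$ (i,l) * T $$ (l,j)) = 0"
        proof (rule sum.neutral, rule ballI)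
          fix l assume l: "l \<in> {..<q}-{j}"
          show "Y $$ (i,l) * T $$ (l,j) = 0"
          proof (cases "l < j")
            case True thus ?thesis using less.IH[of l] less.prems ip by auto
          next
            case False hence "j < l" using l by auto
            thus ?thesis using ut T l unfolding upper_triangular_def by auto
          qed
        qed
        with r show ?thesis by simp
      qed
      finally show "(A *\<^sub>v y) $ i = (T $$ (j,j) \<cdot>\<^sub>v y) $ i" using ip y y_def Y less.prems by simp
    qed (use A y in auto)
    note Av = this
    have "y = 0\<^sub>v p"
    proof (rule ccontr)
      assume "y \<noteq> 0\<^sub>v p"
      hence "eigenvalue A (T $$ (j,j))" using Av y A unfolding eigenvalue_def eigenvector_def
        by auto
      moreover have "eigenvalue B (T $$ (j,j))" using evT eig_diag_ut[OF T ut less.prems] by blast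
      ultimately show False using disj unfolding spectrum_def by auto
    qed
    thus ?case using y_def Y less.prems
      by (metis carrier_matD(1) carrier_matD(2) col_def index_vec index_zero_vec(1))
  qed
  have Yz: "Y = 0\<^sub>m p q" using Y0 Y by (intro eq_matI) auto
  have "X = X * (P * Q)" using PQ X by simp
  also have "\<dots> = Y * Q" using X P Q Y_def by (simp add: assoc_mult_mat)
  finally show ?thesis using Yz Q by simp
qed

lemma star_sc_simps[simp]:
  "star_sc c (a + b) = star_sc c a + star_sc c b"
  "star_sc c (a * b) = star_sc c a * star_sc c b"
  "star_sc c (- a) = - star_sc c a"
  "star_sc c (a ^ k) = star_sc c a ^ k"
  "star_sc c 0 = 0" "star_sc c 1 = 1"
  "star_sc c (sum f S) = (\<Sum>x\<in>S. star_sc c (f x))"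
  "star_sc c (star_sc c a) = a"
  by (auto simp: star_sc_def)

lemma star_sc_eq0[simp]: "star_sc c a = 0 \<longleftrightarrow> a = 0"
  by (auto simp: star_sc_def)

lemma star_dims[simp]: "dim_row (star_mat c A) = dim_col A" "dim_col (star_mat c A) = dim_row A"
  by (auto simp: star_mat_def)

lemma star_index[simp]: "i < dim_col A \<Longrightarrow> j < dim_row A \<Longrightarrow> star_mat c A $$ (i,j) = star_sc c (A $$ (j,i))"
  by (auto simp: star_mat_def star_sc_def)

lemma star_mult: "dim_col A = dim_row B \<Longrightarrow> star_mat c (A * B) = star_mat c B * star_mat c A"
  by (rule eq_matI) (auto simp: scalar_prod_def mult.commute)

lemma star_add: "dim_row A = dim_row B \<Longrightarrow> dim_col A = dim_col B \<Longrightarrow> star_mat c (A + B) = star_mat c A + star_mat c B"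
  by (rule eq_matI) auto

lemma star_smult: "star_mat c (k \<cdot>\<^sub>m A) = star_sc c k \<cdot>\<^sub>m star_mat c A"
  by (rule eq_matI) auto

lemma star_zero: "star_mat c (0\<^sub>m a b) = 0\<^sub>m b a"
  by (rule eq_matI) auto

lemma det_star: assumes "A \<in> carrier_mat n n" shows "det (star_mat c A) = star_sc c (det A)"
proof (cases c)
  case True
  interpret h: comm_ring_hom cnj by unfold_locales auto
  have "det (star_mat c A) = det (map_mat cnj (transpose_mat A))" using True by (simp add: star_mat_def)
  also have "\<dots> = cnj (det (transpose_mat A))" by simp
  also have "\<dots> = cnj (det A)" using det_transpose[OF assms] by simp
  finally show ?thesis using True by (simp add: star_sc_def)
next
  case False thus ?thesis using det_transpose[OF assms] by (simp add: star_mat_def star_sc_def)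
qed

lemma massoc: "dim_col A = dim_row B \<Longrightarrow> dim_col B = dim_row C \<Longrightarrow> A * B * C = A * (B * C)"
  by (rule assoc_mult_mat[of A "dim_row A" "dim_col A" B "dim_col B" C "dim_col C"]) auto
lemma mdistL: "dim_row A = dim_row B \<Longrightarrow> dim_col A = dim_col B \<Longrightarrow> dim_col A = dim_row C \<Longrightarrow> (A + B) * C = A * C + B * C"
  by (rule add_mult_distrib_mat[of A "dim_row A" "dim_col A"]) auto
lemma mdistR: "dim_row B = dim_row C \<Longrightarrow> dim_col B = dim_col C \<Longrightarrow> dim_col A = dim_row B \<Longrightarrow> A * (B + C) = A * B + A * C"
  by (rule mult_add_distrib_mat[of A "dim_row A" "dim_col A"]) auto
lemma msmultL: "dim_col A = dim_row B \<Longrightarrow> (k \<cdot>\<^sub>m A) * B = (k::complex) \<cdot>\<^sub>m (A * B)"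
  by (rule eq_matI) auto
lemma msmultR: "dim_col A = dim_row B \<Longrightarrow> A * (k \<cdot>\<^sub>m B) = (k::complex) \<cdot>\<^sub>m (A * B)"
  by (rule eq_matI) auto
lemma mzeroR: "dim_col A = a \<Longrightarrow> A * 0\<^sub>m a b = (0\<^sub>m (dim_row A) b :: complex mat)"
  by (rule eq_matI) auto
lemma mzeroL: "b = dim_row A \<Longrightarrow> 0\<^sub>m a b * A = (0\<^sub>m a (dim_col A) :: complex mat)"
  by (rule eq_matI) auto

lemmas mnorm = massoc mdistL mdistR msmultL msmultR mzeroR mzeroL star_mult star_add star_smult star_zero

lemma alg:
  fixes a1 a2 a3 b1 b2 c e1 e2 :: complex
  assumes "e1 = 1 \<or> e1 = -1" "e2 = 1 \<or> e2 = -1" "a1 + a2 + a3 = 0" "e1 * b1 + e2 * b2 + e1 * a3 = 0"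
  shows "a1 + e1 * e2 * c + a2 = e1 * e2 * (c + e1 * e2 * b1 + b2)"
proof -
  have ee: "e1 * e1 = 1" "e2 * e2 = 1" using assms(1,2) by auto
  have a: "a1 + a2 = - a3" using assms(3) by (simp add: eq_neg_iff_add_eq_0)
  have "e1 * (e1 * b1 + e2 * b2 + e1 * a3) = 0" using assms(4) by simp
  hence b: "b1 + e1 * e2 * b2 = - a3" using ee by (simp add: algebra_simps eq_neg_iff_add_eq_0)
  have "e1 * e2 * (c + e1 * e2 * b1 + b2) = e1 * e2 * c + (e1*e1)*(e2*e2) * b1 + e1 * e2 * b2"
    by (simp add: algebra_simps)
  also have "\<dots> = e1 * e2 * c + (b1 + e1 * e2 * b2)" using ee by simp
  also have "\<dots> = a1 + e1 * e2 * c + a2" using a b by simp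
  finally show ?thesis by simp
qed

theorem proposition2p2:
  fixes KK :: "complex set" and c :: bool and e1 e2 :: complex
    and M D K Xj Lj Xk Lk :: "complex mat" and n pj pk :: nat
  assumes KK: "KK = \<real> \<or> KK = UNIV"
    and e1: "e1 = 1 \<or> e1 = -1" and e2: "e2 = 1 \<or> e2 = -1"
    and M: "M \<in> carrier_mat n n" and D: "D \<in> carrier_mat n n" and K: "K \<in> carrier_mat n n"
    and entries: "\<forall>i<n. \<forall>l<n. M $$ (i,l) \<in> KK \<and> D $$ (i,l) \<in> KK \<and> K $$ (i,l) \<in> KK"
    and symM: "star_mat c M = e1 \<cdot>\<^sub>m M" and symD: "star_mat c D = e2 \<cdot>\<^sub>m D"
    and symK: "star_mat c K = e1 \<cdot>\<^sub>m K"
    and Xj: "Xj \<in> carrier_mat n pj" and Lj: "Lj \<in> carrier_mat pj pj"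
    and Xk: "Xk \<in> carrier_mat n pk" and Lk: "Lk \<in> carrier_mat pk pk"
    and entries_j: "(\<forall>i<n. \<forall>l<pj. Xj $$ (i,l) \<in> KK) \<and> (\<forall>i<pj. \<forall>l<pj. Lj $$ (i,l) \<in> KK)"
    and entries_k: "(\<forall>i<n. \<forall>l<pk. Xk $$ (i,l) \<in> KK) \<and> (\<forall>i<pk. \<forall>l<pk. Lk $$ (i,l) \<in> KK)"
    and inv_j: "invariant_pair M D K Xj Lj" and inv_k: "invariant_pair M D K Xk Lk"
  shows "(\<forall>l0. quad_eigenvalue M D K l0 \<longleftrightarrow> quad_eigenvalue M D K (e1 * e2 * star_sc c l0))
    \<and> S_mat c e1 e2 M D Xj Lj Xk Lk * Lk
        = (e1 * e2) \<cdot>\<^sub>m (star_mat c Lj * S_mat c e1 e2 M D Xj Lj Xk Lk)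
    \<and> (spectrum ((e1 * e2) \<cdot>\<^sub>m star_mat c Lj) \<inter> spectrum Lk = {}
        \<longrightarrow> S_mat c e1 e2 M D Xj Lj Xk Lk = 0\<^sub>m pj pk)"
proof -
  have dims: "dim_row M = n" "dim_col M = n" "dim_row D = n" "dim_col D = n" "dim_row K = n" "dim_col K = n"
    "dim_row Xj = n" "dim_col Xj = pj" "dim_row Xk = n" "dim_col Xk = pk"
    "dim_row Lj = pj" "dim_col Lj = pj" "dim_row Lk = pk" "dim_col Lk = pk"
    using M D K Xj Xk Lj Lk by auto
  have e1s: "e1 * e1 = 1" "star_sc c e1 = e1" using e1 by (auto simp: star_sc_def)
  have e2s: "e2 * e2 = 1" "star_sc c e2 = e2" using e2 by (auto simp: star_sc_def)
  have symM': "\<And>i l. i < n \<Longrightarrow> l < n \<Longrightarrow> star_sc c (M $$ (l,i)) = e1 * M $$ (i,l)"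
    using symM dims by (metis index_smult_mat(1) star_dims star_index)
  have symD': "\<And>i l. i < n \<Longrightarrow> l < n \<Longrightarrow> star_sc c (D $$ (l,i)) = e2 * D $$ (i,l)"
    using symD dims by (metis index_smult_mat(1) star_dims star_index)
  have symK': "\<And>i l. i < n \<Longrightarrow> l < n \<Longrightarrow> star_sc c (K $$ (l,i)) = e1 * K $$ (i,l)"
    using symK dims by (metis index_smult_mat(1) star_dims star_index)
  have pa: "quad_eigenvalue M D K l0 \<longleftrightarrow> quad_eigenvalue M D K (e1 * e2 * star_sc c l0)" for l0
  proof -
    define Q where "Q = (\<lambda>l. (l^2) \<cdot>\<^sub>m M + l \<cdot>\<^sub>m D + K)"
    have Qc: "Q l \<in> carrier_mat n n" for l using M D K Q_def by auto
    have "star_mat c (Q l0) = e1 \<cdot>\<^sub>m Q (e1 * e2 * star_sc c l0)"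
    proof (rule eq_matI)
      fix i l assume i: "i < dim_row (e1 \<cdot>\<^sub>m Q (e1 * e2 * star_sc c l0))"
        and l: "l < dim_col (e1 \<cdot>\<^sub>m Q (e1 * e2 * star_sc c l0))"
      hence i: "i < n" and l: "l < n" using Qc[of "e1 * e2 * star_sc c l0"] by auto
      have "star_mat c (Q l0) $$ (i,l) = star_sc c (Q l0 $$ (l,i))" using Qc[of l0] i l by (intro star_index) auto
      also have "\<dots> = star_sc c l0 ^ 2 * (e1 * M $$ (i,l)) + star_sc c l0 * (e2 * D $$ (i,l)) + e1 * K $$ (i,l)"
        using i l dims symM' symD' symK' by (simp add: Q_def)
      also have "\<dots> = e1 * ((e1 * e2 * star_sc c l0)^2 * M $$ (i,l) + (e1 * e2 * star_sc c l0) * D $$ (i,l) + K $$ (i,l))"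
        using e1 e2 by (auto simp: algebra_simps power2_eq_square)
      also have "\<dots> = (e1 \<cdot>\<^sub>m Q (e1 * e2 * star_sc c l0)) $$ (i,l)" using i l dims by (simp add: Q_def)
      finally show "star_mat c (Q l0) $$ (i,l) = (e1 \<cdot>\<^sub>m Q (e1 * e2 * star_sc c l0)) $$ (i,l)" .
    qed (use Qc[of l0] Qc[of "e1 * e2 * star_sc c l0"] in auto)
    hence "det (star_mat c (Q l0)) = e1 ^ n * det (Q (e1 * e2 * star_sc c l0))" using Qc[of "e1 * e2 * star_sc c l0"] by simp
    hence "star_sc c (det (Q l0)) = e1 ^ n * det (Q (e1 * e2 * star_sc c l0))" using det_star[OF Qc] by simp
    moreover have "e1 ^ n \<noteq> 0" using e1 by auto
    moreover have qe: "\<And>l. quad_eigenvalue M D K l \<longleftrightarrow> det (Q l) = 0"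
      by (simp add: quad_eigenvalue_def Q_def)
    ultimately show ?thesis by (metis star_sc_eq0 mult_eq_0_iff)
  qed
  define Aj where "Aj = star_mat c Xj"
  define Ljs where "Ljs = star_mat c Lj"
  have dA: "dim_row Aj = pj" "dim_col Aj = n" "dim_row Ljs = pj" "dim_col Ljs = pj"
    using dims by (auto simp: Aj_def Ljs_def)
  have Ik: "Aj*(M*(Xk*(Lk*Lk))) + Aj*(D*(Xk*Lk)) + Aj*(K*Xk) = 0\<^sub>m pj pk"
    using arg_cong[OF inv_k[unfolded invariant_pair_def], of "\<lambda>Z. Aj * Z"] by (simp add: mnorm dims dA)
  have IIj0: "star_mat c (M * Xj * Lj * Lj + D * Xj * Lj + K * Xj) = 0\<^sub>m pj n"
    using inv_j[unfolded invariant_pair_def] dims by (simp add: star_zero)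
  have IIj: "e1 \<cdot>\<^sub>m (Ljs * (Ljs * (Aj * (M * Xk)))) + e2 \<cdot>\<^sub>m (Ljs * (Aj * (D * Xk))) +
     e1 \<cdot>\<^sub>m (Aj * (K * Xk)) = 0\<^sub>m pj pk"
    using arg_cong[OF IIj0, of "\<lambda>Z. Z * Xk"] by (simp add: mnorm dims dA symM symD symK flip: Aj_def Ljs_def)
  have pb: "S_mat c e1 e2 M D Xj Lj Xk Lk * Lk
        = (e1 * e2) \<cdot>\<^sub>m (star_mat c Lj * S_mat c e1 e2 M D Xj Lj Xk Lk)"
    unfolding S_mat_def Aj_def[symmetric] Ljs_def[symmetric]
    apply (simp add: mnorm dims dA)
    apply (rule eq_matI)
    subgoal for i l
      using arg_cong[OF Ik, of "\<lambda>Z. Z $$ (i,l)"] arg_cong[OF IIj, of "\<lambda>Z. Z $$ (i,l)"]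
      apply (simp add: dims dA)
      apply (rule alg[OF e1 e2])
       apply assumption+
      done
    by (simp_all add: dims dA)
  have Sc: "S_mat c e1 e2 M D Xj Lj Xk Lk \<in> carrier_mat pj pk"
    unfolding S_mat_def Aj_def[symmetric] Ljs_def[symmetric] by (rule carrier_matI) (simp_all add: dims dA)
  have pc: "S_mat c e1 e2 M D Xj Lj Xk Lk = 0\<^sub>m pj pk"
    if disj: "spectrum ((e1 * e2) \<cdot>\<^sub>m star_mat c Lj) \<inter> spectrum Lk = {}"
  proof (rule sylvester_unique[OF _ Lk Sc _ disj])
    show "(e1 * e2) \<cdot>\<^sub>m star_mat c Lj \<in> carrier_mat pj pj" by (rule carrier_matI) (simp_all add: dims)
    show "(e1 * e2) \<cdot>\<^sub>m star_mat c Lj * S_mat c e1 e2 M D Xj Lj Xk Lk = S_mat c e1 e2 M D Xj Lj Xk Lk * Lk"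
      using pb Sc dims msmultL[of "star_mat c Lj" "S_mat c e1 e2 M D Xj Lj Xk Lk" "e1 * e2"] by simp
  qed
  show ?thesis using pa pb pc by blast
qed

end
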